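(* Let $\Lambda$ be a lattice of signature $(1,n-1)$, $h\in\Lambda$ with $(h^2)>0$, $\mathcal C^+:=\{x\in\Lambda_{\mathbb R}:(x^2)>0,\ (x,h)>0\}$, and $N>0$. Let $\Pi=\sum_{i=1}^m\mathbb R_{\ge0}x_i$ be a cone contained in $\overline{\mathcal C^+}$ with $x_1,\dots,x_m\in\Lambda_{\mathbb Q}$. Then the set $\{v\in\Lambda : (v^2)>-N,\ v^\perp\cap\Pi\cap\mathcal C^+\neq\emptyset\}$ is finite.
   Context: $(x^2)$ abbreviates $(x,x)$; $\overline{\mathcal C^+}$ is the closure of $\mathcal C^+$ in $\Lambda_{\mathbb R}$; $v^\perp$ is the orthogonal hyperplane of $v$ in $\Lambda_{\mathbb R}$. *)

theory Defs
  imports "HOL-Analysis.Analysis"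
begin

text \<open>A lattice of rank n is modelled as \<Lambda> = \<int>^n inside \<Lambda>_\<real> = \<real>^n (index type 'n),
  with the bilinear form given by a symmetric integral Gram matrix B.\<close>

definition bform :: "real^'n^'n \<Rightarrow> real^'n \<Rightarrow> real^'n \<Rightarrow> real" where
  "bform B x y = x \<bullet> (B *v y)"

definition lattice_pts :: "(real^'n) set" where
  "lattice_pts = {v. \<forall>i. v $ i \<in> \<int>}"

definition rational_pts :: "(real^'n) set" where
  "rational_pts = {v. \<forall>i. v $ i \<in> \<rat>}"

definition integral_symmetric_form :: "real^'n^'n \<Rightarrow> bool" where
  "integral_symmetric_form B \<longleftrightarrow> transpose B = B \<and> (\<forall>i j. B $ i $ j \<in> \<int>)"

text \<open>Signature (1, n-1): over \<real> the form is congruent to diag(1,-1,...,-1).\<close>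
definition signature_1_nm1 :: "real^'n^'n \<Rightarrow> bool" where
  "signature_1_nm1 B \<longleftrightarrow> (\<exists>(P::real^'n^'n) i0. invertible P \<and>
     transpose P ** B ** P = (\<chi> i j. if i = j then (if i = i0 then 1 else -1) else 0))"

definition pos_cone :: "real^'n^'n \<Rightarrow> real^'n \<Rightarrow> (real^'n) set" where
  "pos_cone B h = {x. bform B x x > 0 \<and> bform B x h > 0}"

definition gen_cone :: "(real^'n) set \<Rightarrow> (real^'n) set" where
  "gen_cone X = {y. \<exists>c. (\<forall>x\<in>X. c x \<ge> 0) \<and> y = (\<Sum>x\<in>X. c x *\<^sub>R x)}"

end

theory Submission
  imports Defs
begin


definition F :: "'n \<Rightarrow> real^'n \<Rightarrow> real^'n \<Rightarrow> real" where
  "F i0 a b = 2 * (a$i0) * (b$i0) - a \<bullet> b"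

lemma F_strong:
  fixes y w :: "real^'n"
  assumes y: "F i0 y y > 0" and wy: "F i0 w y = 0"
  shows "F i0 w w \<le> - (F i0 y y / (y \<bullet> y)) * (w \<bullet> w)"
proof -
  define e :: "real^'n" where "e = axis i0 1"
  define wr where "wr = w - (w$i0) *\<^sub>R e"
  define yr where "yr = y - (y$i0) *\<^sub>R e"
  have e1: "e$i0 = 1" unfolding e_def by (simp add: axis_def)
  have ee: "e \<bullet> e = 1" unfolding e_def by (simp add: inner_axis_axis)
  have we: "\<And>x::real^'n. x \<bullet> e = x$i0" unfolding e_def by (simp add: inner_axis)
  have ew: "\<And>x::real^'n. e \<bullet> x = x$i0" using we by (simp add: inner_commute)
  have c1: "wr \<bullet> yr = w \<bullet> y - w$i0 * y$i0"
    unfolding wr_def yr_def by (simp add: inner_diff_left inner_diff_right we ew ee e1 algebra_simps)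
  have c2: "wr \<bullet> wr = w \<bullet> w - (w$i0)^2"
    unfolding wr_def by (simp add: inner_diff_left inner_diff_right we ew ee e1 algebra_simps power2_eq_square)
  have c3: "yr \<bullet> yr = y \<bullet> y - (y$i0)^2"
    unfolding yr_def by (simp add: inner_diff_left inner_diff_right we ew ee e1 algebra_simps power2_eq_square)
  have cs: "(wr \<bullet> yr)^2 \<le> (wr \<bullet> wr) * (yr \<bullet> yr)" by (rule Cauchy_Schwarz_ineq)
  have wy': "w \<bullet> y = 2 * w$i0 * y$i0" using wy unfolding F_def by simp
  have Ypos: "y \<bullet> y \<ge> (y$i0)^2" using c3 inner_ge_zero[of yr] by linarith
  have Fy: "F i0 y y = 2*(y$i0)^2 - y \<bullet> y" unfolding F_def by (simp add: power2_eq_square)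
  have Ygt: "y \<bullet> y > 0" using Ypos y Fy by (smt (verit) zero_le_power2)
  have key: "(w$i0)^2 * (y \<bullet> y) \<le> (w \<bullet> w) * (y \<bullet> y - (y$i0)^2)"
  proof -
    have "(w$i0 * y$i0)^2 \<le> (w \<bullet> w - (w$i0)^2) * (y \<bullet> y - (y$i0)^2)"
      using cs c1 c2 c3 wy' by (simp add: algebra_simps)
    thus ?thesis by (simp add: algebra_simps power2_eq_square)
  qed
  have Fw: "F i0 w w = 2*(w$i0)^2 - w \<bullet> w" unfolding F_def by (simp add: power2_eq_square)
  have "(F i0 w w) * (y \<bullet> y) \<le> - F i0 y y * (w \<bullet> w)"
    using key unfolding Fw Fy by (simp add: algebra_simps)
  hence "F i0 w w \<le> - F i0 y y * (w \<bullet> w) / (y \<bullet> y)"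
    using Ygt by (subst pos_le_divide_eq) auto
  thus ?thesis by (simp add: divide_simps)
qed

lemma F_add1: "F i0 (a + b) c = F i0 a c + F i0 b c"
  unfolding F_def by (simp add: inner_add_left algebra_simps)
lemma F_add2: "F i0 c (a + b) = F i0 c a + F i0 c b"
  unfolding F_def by (simp add: inner_add_right algebra_simps)
lemma F_diff1: "F i0 (a - b) c = F i0 a c - F i0 b c"
  unfolding F_def by (simp add: inner_diff_left algebra_simps)
lemma F_diff2: "F i0 c (a - b) = F i0 c a - F i0 c b"
  unfolding F_def by (simp add: inner_diff_right algebra_simps)
lemma F_scale1: "F i0 (r *\<^sub>R a) c = r * F i0 a c"
  unfolding F_def by (simp add: algebra_simps)
lemma F_scale2: "F i0 c (r *\<^sub>R a) = r * F i0 c a"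
  unfolding F_def by (simp add: algebra_simps)
lemma F_sym: "F i0 a b = F i0 b a"
  unfolding F_def by (simp add: inner_commute algebra_simps)

lemma F_bound:
  fixes y :: "real^'n"
  assumes y: "F i0 y y > 0"
  shows "\<exists>R. \<forall>u. F i0 u u > - L \<and> \<bar>F i0 u y\<bar> \<le> K \<longrightarrow> norm u \<le> R"
proof -
  define c where "c = F i0 y y / (y \<bullet> y)"
  have Ygt: "y \<bullet> y > 0"
  proof -
    have "y \<noteq> 0" using y unfolding F_def by auto
    thus ?thesis by simp
  qed
  have cpos: "c > 0" unfolding c_def using y Ygt by simp
  define M where "M = (L + K^2 / F i0 y y) / c"
  define R where "R = sqrt (max 0 M) + K / F i0 y y * norm y"
  have "norm u \<le> R" if h1: "F i0 u u > - L" and h2: "\<bar>F i0 u y\<bar> \<le> K" for u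
  proof -
    define t where "t = F i0 u y / F i0 y y"
    define w where "w = u - t *\<^sub>R y"
    have wy: "F i0 w y = 0" unfolding w_def t_def using y by (simp add: F_diff1 F_scale1)
    have uw: "u = w + t *\<^sub>R y" unfolding w_def by simp
    have Fu: "F i0 u u = F i0 w w + t^2 * F i0 y y"
      unfolding uw by (simp add: F_add1 F_add2 F_scale1 F_scale2 wy F_sym[of i0 y w] power2_eq_square)
    have t2: "t^2 * F i0 y y = (F i0 u y)^2 / F i0 y y"
      unfolding t_def using y by (simp add: power2_eq_square field_simps)
    have "(F i0 u y)^2 \<le> K^2" using h2 abs_le_square_iff[of "F i0 u y" K] by auto
    hence "(F i0 u y)^2 / F i0 y y \<le> K^2 / F i0 y y" using y by (simp add: divide_right_mono)
    hence Fw: "F i0 w w > - L - K^2 / F i0 y y" using h1 Fu t2 by linarith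
    have "F i0 w w \<le> - c * (w \<bullet> w)" using F_strong[OF y wy] unfolding c_def by simp
    hence "c * (w \<bullet> w) < L + K^2 / F i0 y y" using Fw by linarith
    hence "w \<bullet> w < M" unfolding M_def using cpos by (simp add: field_simps)
    hence nw: "norm w \<le> sqrt (max 0 M)"
      by (simp add: norm_eq_sqrt_inner)
    have "\<bar>t\<bar> \<le> K / F i0 y y" unfolding t_def using h2 y by (simp add: abs_divide divide_right_mono)
    hence "\<bar>t\<bar> * norm y \<le> K / F i0 y y * norm y" by (rule mult_right_mono) simp
    moreover have "norm u \<le> norm w + \<bar>t\<bar> * norm y" unfolding uw
      using norm_triangle_ineq[of w "t *\<^sub>R y"] by simp
    ultimately show ?thesis unfolding R_def using nw by linarith
  qed
  thus ?thesis by blast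
qed

definition Dm :: "'n \<Rightarrow> real^'n^'n" where
  "Dm i0 = (\<chi> i j. if i = j then (if i = i0 then 1 else -1) else 0)"

lemma sum_delta_mult: "(\<Sum>j\<in>UNIV. (if i = j then c else 0) * (b::real^'n)$j) = c * b$i"
proof -
  have "(\<Sum>j\<in>UNIV. (if i = j then c else 0) * b$j) = (\<Sum>j\<in>UNIV. if i = j then c * b$j else 0)"
    by (rule sum.cong) auto
  thus ?thesis by simp
qed

lemma Dm_mult: "Dm i0 *v b = (\<chi> i. if i = i0 then b$i else - b$i)"
  unfolding Dm_def by (simp add: vec_eq_iff matrix_vector_mult_def sum_delta_mult)

lemma bform_Dm: "bform (Dm i0) a b = F i0 a b"
proof -
  have "bform (Dm i0) a b = (\<Sum>i\<in>UNIV. a$i * (if i = i0 then b$i else - b$i))"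
    unfolding bform_def Dm_mult inner_vec_def by simp
  also have "\<dots> = (\<Sum>i\<in>UNIV. (if i = i0 then 2 * (a$i * b$i) else 0) - a$i * b$i)"
    by (rule sum.cong) auto
  also have "\<dots> = 2 * (a$i0) * (b$i0) - a \<bullet> b"
    by (simp add: sum_subtractf inner_vec_def)
  finally show ?thesis unfolding F_def .
qed

lemma bform_transfer:
  fixes B P Q :: "real^'n^'n"
  assumes QP: "P ** Q = mat 1" and D: "transpose P ** B ** P = Dm i0"
  shows "bform B x y = F i0 (Q *v x) (Q *v y)"
proof -
  have gen: "bform B (P *v a) (P *v b) = F i0 a b" for a b
  proof -
    have "bform B (P *v a) (P *v b) = (a v* transpose P) \<bullet> (B *v (P *v b))"
      unfolding bform_def by (simp add: transpose_matrix_vector[symmetric])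
    also have "\<dots> = a \<bullet> (transpose P *v (B *v (P *v b)))"
      by (rule dot_lmul_matrix)
    also have "transpose P *v (B *v (P *v b)) = (transpose P ** B ** P) *v b"
      by (simp add: matrix_vector_mul_assoc matrix_mul_assoc)
    finally show ?thesis using D bform_Dm unfolding bform_def by simp
  qed
  have "x = P *v (Q *v x)" "y = P *v (Q *v y)"
    by (simp_all add: matrix_vector_mul_assoc QP)
  thus ?thesis using gen by metis
qed

lemma finite_lattice_bounded:
  assumes "bounded S"
  shows "finite (S \<inter> lattice_pts)"
proof -
  obtain r where r: "\<forall>x\<in>S. norm x \<le> r" using assms bounded_iff by blast
  define A :: "real set" where "A = of_int ` {-\<lceil>r\<rceil>..\<lceil>r\<rceil>}"
  have fA: "finite A" unfolding A_def by simp
  have "S \<inter> lattice_pts \<subseteq> vec_lambda ` (PiE UNIV (\<lambda>_. A))"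
  proof
    fix x assume x: "x \<in> S \<inter> lattice_pts"
    have "x $ i \<in> A" for i
    proof -
      have "x $ i \<in> \<int>" using x unfolding lattice_pts_def by auto
      then obtain k where k: "x $ i = of_int k" by (auto elim: Ints_cases)
      have "\<bar>x $ i\<bar> \<le> r" using r x component_le_norm_cart[of x i] by auto
      hence "\<bar>real_of_int k\<bar> \<le> r" using k by simp
      hence "k \<in> {-\<lceil>r\<rceil>..\<lceil>r\<rceil>}" by (auto simp: abs_le_iff) linarith+
      thus ?thesis unfolding A_def using k by auto
    qed
    hence "(\<lambda>i. x $ i) \<in> PiE UNIV (\<lambda>_. A)" by auto
    moreover have "x = vec_lambda (\<lambda>i. x $ i)" by simp
    ultimately show "x \<in> vec_lambda ` (PiE UNIV (\<lambda>_. A))" by blast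
  qed
  moreover have "finite (vec_lambda ` (PiE UNIV (\<lambda>_::'n::finite. A)))"
    using fA by (intro finite_imageI finite_PiE) auto
  ultimately show ?thesis by (rule finite_subset)
qed

locale sig =
  fixes B P Q :: "real^'n^'n" and i0 :: 'n
  assumes PQ: "P ** Q = mat 1" and QP: "Q ** P = mat 1"
    and D: "transpose P ** B ** P = Dm i0"
begin

lemma tr: "bform B x y = F i0 (Q *v x) (Q *v y)"
  by (rule bform_transfer[OF PQ D])

lemma b_sym: "bform B x y = bform B y x"
  unfolding tr by (rule F_sym)
lemma b_add1: "bform B (x + y) z = bform B x z + bform B y z"
  unfolding tr by (simp add: matrix_vector_right_distrib F_add1)
lemma b_add2: "bform B z (x + y) = bform B z x + bform B z y"
  unfolding tr by (simp add: matrix_vector_right_distrib F_add2)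
lemma b_diff1: "bform B (x - y) z = bform B x z - bform B y z"
  unfolding tr by (simp add: matrix_vector_mult_diff_distrib F_diff1)
lemma b_diff2: "bform B z (x - y) = bform B z x - bform B z y"
  unfolding tr by (simp add: matrix_vector_mult_diff_distrib F_diff2)
lemma b_scale1: "bform B (r *\<^sub>R x) z = r * bform B x z"
  unfolding tr by (simp add: matrix_vector_mult_scaleR F_scale1)
lemma b_scale2: "bform B z (r *\<^sub>R x) = r * bform B z x"
  unfolding tr by (simp add: matrix_vector_mult_scaleR F_scale2)
lemma b_zero1: "bform B 0 z = 0" and b_zero2: "bform B z 0 = 0"
  unfolding tr F_def by simp_all

lemma b_sum2:
  assumes "finite X"
  shows "bform B z (\<Sum>u\<in>X. c u *\<^sub>R u) = (\<Sum>u\<in>X. c u * bform B z u)"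
  using assms by (induction X rule: finite_induct) (simp_all add: b_zero2 b_add2 b_scale2)

lemma b_sum1:
  assumes "finite X"
  shows "bform B (\<Sum>u\<in>X. c u *\<^sub>R u) z = (\<Sum>u\<in>X. c u * bform B u z)"
  using assms by (induction X rule: finite_induct) (simp_all add: b_zero1 b_add1 b_scale1)

lemma F1:
  assumes z: "bform B z z > 0" and wz: "bform B w z = 0"
  shows "bform B w w \<le> 0 \<and> (bform B w w = 0 \<longrightarrow> w = 0)"
proof -
  let ?y = "Q *v z" and ?w = "Q *v w"
  have y: "F i0 ?y ?y > 0" using z tr by simp
  have Ygt: "?y \<bullet> ?y > 0"
  proof -
    have "?y \<noteq> 0" using y unfolding F_def by auto
    thus ?thesis by simp
  qed
  have st: "F i0 ?w ?w \<le> - (F i0 ?y ?y / (?y \<bullet> ?y)) * (?w \<bullet> ?w)"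
    using F_strong[OF y] wz tr by simp
  have cpos: "F i0 ?y ?y / (?y \<bullet> ?y) > 0" using y Ygt by simp
  have "- (F i0 ?y ?y / (?y \<bullet> ?y)) * (?w \<bullet> ?w) \<le> 0"
    using mult_nonneg_nonneg[OF less_imp_le[OF cpos] inner_ge_zero[of ?w]] by linarith
  hence le: "bform B w w \<le> 0" using st tr by simp
  have "w = 0" if "bform B w w = 0"
  proof -
    have "0 \<le> - (F i0 ?y ?y / (?y \<bullet> ?y)) * (?w \<bullet> ?w)" using st that tr by simp
    hence "(F i0 ?y ?y / (?y \<bullet> ?y)) * (?w \<bullet> ?w) \<le> 0" by linarith
    hence "?w \<bullet> ?w \<le> 0" using cpos by (meson linorder_not_le mult_pos_pos)
    hence "?w = 0" using inner_ge_zero[of ?w] by simp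
    hence "P *v ?w = 0" by simp
    thus "w = 0" by (simp add: matrix_vector_mul_assoc PQ)
  qed
  thus ?thesis using le by blast
qed

lemma key_finite:
  assumes z: "bform B z z > 0"
  shows "finite {v \<in> lattice_pts. bform B v v > - L \<and> \<bar>bform B v z\<bar> \<le> K}"
proof -
  have y: "F i0 (Q *v z) (Q *v z) > 0" using z tr by simp
  obtain R where R: "\<And>u. F i0 u u > - L \<and> \<bar>F i0 u (Q *v z)\<bar> \<le> K \<Longrightarrow> norm u \<le> R"
    using F_bound[OF y, of L K] by blast
  have "{v \<in> lattice_pts. bform B v v > - L \<and> \<bar>bform B v z\<bar> \<le> K} \<subseteq> ((*v) P ` cball 0 R) \<inter> lattice_pts"
  proof
    fix v assume v: "v \<in> {v \<in> lattice_pts. bform B v v > - L \<and> \<bar>bform B v z\<bar> \<le> K}"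
    hence "norm (Q *v v) \<le> R" using R tr by auto
    moreover have "v = P *v (Q *v v)" by (simp add: matrix_vector_mul_assoc PQ)
    ultimately show "v \<in> ((*v) P ` cball 0 R) \<inter> lattice_pts" using v by auto
  qed
  moreover have "finite (((*v) P ` cball 0 R) \<inter> lattice_pts)"
    by (intro finite_lattice_bounded bounded_linear_image) auto
  ultimately show ?thesis by (rule finite_subset)
qed

end



lemma rat_denom:
  assumes "x \<in> rational_pts"
  shows "\<exists>d::nat. d > 0 \<and> (\<forall>i. real d * x$i \<in> \<int>)"
proof -
  have "\<forall>i. \<exists>k::nat. k > 0 \<and> real k * x$i \<in> \<int>"
  proof
    fix i
    have "x$i \<in> \<rat>" using assms unfolding rational_pts_def by auto
    then obtain a b :: int where ab: "b > 0" "x$i = of_int a / of_int b" by (rule Rats_cases') auto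
    have "real (nat b) * x$i = of_int a" using ab by simp
    thus "\<exists>k::nat. k > 0 \<and> real k * x$i \<in> \<int>" using ab by (intro exI[of _ "nat b"]) auto
  qed
  then obtain f where f: "\<And>i. f i > (0::nat) \<and> real (f i) * x$i \<in> \<int>" by metis
  define d where "d = (\<Prod>i\<in>UNIV. f i)"
  have "d > 0" unfolding d_def using f by (simp add: prod_pos)
  moreover have "real d * x$i \<in> \<int>" for i
  proof -
    have "d = f i * (\<Prod>j\<in>UNIV - {i}. f j)" unfolding d_def
      by (simp add: prod.remove)
    hence e: "real d * x$i = real (\<Prod>j\<in>UNIV - {i}. f j) * (real (f i) * x$i)" by simp
    show ?thesis unfolding e by (rule Ints_mult[OF Ints_of_nat]) (use f[of i] in simp)
  qed
  ultimately show ?thesis by blast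
qed

lemma int_form:
  assumes "integral_symmetric_form B" "v \<in> lattice_pts" "w \<in> lattice_pts"
  shows "bform B v w \<in> \<int>"
  using assms unfolding bform_def inner_vec_def matrix_vector_mult_def integral_symmetric_form_def lattice_pts_def
  by (auto intro!: Ints_sum Ints_mult)

lemma int_gap:
  assumes "integral_symmetric_form B" "x \<in> rational_pts"
  shows "\<exists>d::real. d > 0 \<and> (\<forall>v\<in>lattice_pts. bform B v x > 0 \<longrightarrow> bform B v x \<ge> 1 / d)
          \<and> (\<forall>v\<in>lattice_pts. bform B v x < 0 \<longrightarrow> bform B v x \<le> - 1 / d)"
proof -
  obtain d :: nat where d: "d > 0" "\<And>i. real d * x$i \<in> \<int>" using rat_denom[OF assms(2)] by blast
  have lat: "real d *\<^sub>R x \<in> lattice_pts" using d unfolding lattice_pts_def by simp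
  have I: "real d * bform B v x \<in> \<int>" if "v \<in> lattice_pts" for v
  proof -
    have "bform B v (real d *\<^sub>R x) = real d * bform B v x"
      unfolding bform_def by (simp add: matrix_vector_mult_scaleR)
    thus ?thesis using int_form[OF assms(1) that lat] by simp
  qed
  have ge1: "z \<in> \<int> \<Longrightarrow> z > 0 \<Longrightarrow> z \<ge> 1" for z :: real by (auto elim!: Ints_cases)
  have pos: "bform B v x \<ge> 1 / real d" if "v \<in> lattice_pts" "bform B v x > 0" for v
  proof -
    have "real d * bform B v x \<ge> 1" using ge1[OF I[OF that(1)]] that d by simp
    thus ?thesis using d by (simp add: field_simps)
  qed
  have neg: "bform B v x \<le> - 1 / real d" if "v \<in> lattice_pts" "bform B v x < 0" for v
  proof -
    have "- (real d * bform B v x) \<in> \<int>" using I[OF that(1)] by simp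
    moreover have "real d * bform B v x < 0" using that d by (simp add: mult_pos_neg)
    ultimately have "- (real d * bform B v x) \<ge> 1" using ge1[of "- (real d * bform B v x)"] by simp
    thus ?thesis using d by (simp add: field_simps)
  qed
  show ?thesis using d pos neg by (intro exI[of _ "real d"]) auto
qed



lemma psd2:
  fixes qx qy be a c :: real
  assumes "qx \<ge> 0" "qy \<ge> 0" "be^2 \<le> qx * qy"
  shows "a^2 * qx + 2*a*c*be + c^2 * qy \<ge> 0"
proof (cases "qx = 0")
  case True
  hence "be = 0" using assms by simp
  thus ?thesis using True assms by simp
next
  case False
  hence qp: "qx > 0" using assms by simp
  have "qx * (a^2 * qx + 2*a*c*be + c^2 * qy) = (a*qx + c*be)^2 + c^2 * (qx*qy - be^2)"
    by (simp add: power2_eq_square algebra_simps)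
  also have "\<dots> \<ge> 0" using assms by simp
  finally show ?thesis using qp by (simp add: zero_le_mult_iff)
qed

lemma sum_pos_ex: "sum f X > (0::real) \<Longrightarrow> \<exists>u\<in>X. f u > 0"
  by (meson not_le sum_nonpos)

context sig begin

lemma q_comb: "bform B (a *\<^sub>R x + c *\<^sub>R y) (a *\<^sub>R x + c *\<^sub>R y)
   = a^2 * bform B x x + 2*a*c*bform B x y + c^2 * bform B y y"
  by (simp add: b_add1 b_add2 b_scale1 b_scale2 b_sym[of y x] power2_eq_square algebra_simps)

lemma q_add: "bform B (x + y) (x + y) = bform B x x + 2 * bform B x y + bform B y y"
  using q_comb[of 1 x 1 y] by simp

lemma cc_zero:
  assumes "bform B h h > 0" "bform B x x \<ge> 0" "bform B x h = 0"
  shows "x = 0"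
  using F1[of h x] assms by auto

lemma beta_nonneg:
  assumes hh: "bform B h h > 0"
    and x: "bform B x x \<ge> 0" "bform B x h \<ge> 0"
    and y: "bform B y y \<ge> 0" "bform B y h \<ge> 0"
  shows "bform B x y \<ge> 0"
proof -
  define s where "s = bform B x h"
  define t where "t = bform B y h"
  show ?thesis
  proof (cases "s = 0 \<or> t = 0")
    case True
    thus ?thesis
    proof
      assume "s = 0" hence "x = 0" using cc_zero[OF hh x(1)] s_def by simp
      thus ?thesis by (simp add: b_zero1)
    next
      assume "t = 0" hence "y = 0" using cc_zero[OF hh y(1)] t_def by simp
      thus ?thesis by (simp add: b_zero2)
    qed
  next
    case False
    hence st: "s > 0" "t > 0" using x y s_def t_def by auto
    define u where "u = t *\<^sub>R x + (- s) *\<^sub>R y"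
    have "bform B u h = 0" unfolding u_def s_def t_def by (simp add: b_add1 b_diff1 b_scale1)
    hence "bform B u u \<le> 0" using F1[OF hh] by blast
    hence "t^2 * bform B x x + 2*t*(-s)*bform B x y + s^2 * bform B y y \<le> 0"
      unfolding u_def q_comb by simp
    moreover have "t^2 * bform B x x + s^2 * bform B y y \<ge> 0" using x y by simp
    ultimately have "0 \<le> t * s * bform B x y" by (simp add: algebra_simps)
    moreover have "t * s > 0" using st by simp
    ultimately show ?thesis by (simp add: zero_le_mult_iff)
  qed
qed

lemma det_neg:
  assumes hh: "bform B h h > 0"
    and x: "bform B x x \<ge> 0" "bform B x h \<ge> 0"
    and y: "bform B y y \<ge> 0" "bform B y h \<ge> 0"
    and vx: "bform B v x > 0" and vy: "bform B v y < 0"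
  shows "bform B x x * bform B y y < (bform B x y)^2"
proof (rule ccontr)
  assume "\<not> ?thesis"
  hence le: "(bform B x y)^2 \<le> bform B x x * bform B y y" by simp
  define s where "s = bform B x h"
  define t where "t = bform B y h"
  define u where "u = t *\<^sub>R x + (- s) *\<^sub>R y"
  have "bform B u h = 0" unfolding u_def s_def t_def by (simp add: b_add1 b_diff1 b_scale1)
  moreover have "bform B u u \<ge> 0" unfolding u_def q_comb using psd2[OF x(1) y(1) le, where a=t and c="-s"] by simp
  ultimately have "u = 0" using F1[OF hh, of u] by auto
  hence "bform B v u = 0" by (simp add: b_zero2)
  hence e: "t * bform B v x + (- s) * bform B v y = 0" unfolding u_def by (simp add: b_add2 b_diff2 b_scale2)
  have "t * bform B v x \<ge> 0" using x y vx t_def by simp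
  moreover have "(-s) * bform B v y \<ge> 0" using x vy s_def by (simp add: mult_nonneg_nonpos)
  ultimately have "(-s) * bform B v y = 0" using e by linarith
  hence "s = 0" using vy by simp
  hence "x = 0" using cc_zero[OF hh x(1)] s_def by simp
  thus False using vx by (simp add: b_zero2)
qed

end



context sig begin

lemma A_finite:
  assumes BI: "integral_symmetric_form B" and hh: "bform B h h > 0"
    and x: "bform B x x \<ge> 0" "bform B x h \<ge> 0" "x \<in> rational_pts"
    and y: "bform B y y \<ge> 0" "bform B y h \<ge> 0" "y \<in> rational_pts"
  shows "finite {v \<in> lattice_pts. bform B v v > - N \<and> bform B v x > 0 \<and> bform B v y < 0}"
    (is "finite ?S")
proof (cases "?S = {}")
  case True show ?thesis by (simp only: True finite.emptyI)
next
  case False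
  then obtain v0 where v0: "bform B v0 x > 0" "bform B v0 y < 0" by blast
  define qx where "qx = bform B x x"
  define qy where "qy = bform B y y"
  define be where "be = bform B x y"
  define det where "det = qx * qy - be^2"
  have dneg: "det < 0" using det_neg[OF hh x(1,2) y(1,2) v0] unfolding det_def qx_def qy_def be_def by simp
  have be0: "be \<ge> 0" using beta_nonneg[OF hh x(1,2) y(1,2)] be_def by simp
  have bepos: "be > 0"
  proof (rule ccontr)
    assume "\<not> be > 0" hence "be = 0" using be0 by simp
    hence "det \<ge> 0" unfolding det_def qx_def qy_def using x y by simp
    thus False using dneg by simp
  qed
  obtain dx where dx: "dx > 0" "\<And>v. v \<in> lattice_pts \<Longrightarrow> bform B v x > 0 \<Longrightarrow> bform B v x \<ge> 1 / dx"
    using int_gap[OF BI x(3)] by blast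
  obtain dy where dy: "dy > 0" "\<And>v. v \<in> lattice_pts \<Longrightarrow> bform B v y < 0 \<Longrightarrow> bform B v y \<le> - 1 / dy"
    using int_gap[OF BI y(3)] by blast
  define M where "M = N * (- det) / (2 * be)"
  define z where "z = x + y"
  have qz: "bform B z z > 0" unfolding z_def q_add using x y bepos be_def by simp
  have "?S \<subseteq> {v \<in> lattice_pts. bform B v v > - N \<and> \<bar>bform B v z\<bar> \<le> M * (dx + dy)}"
  proof
    fix v assume v: "v \<in> ?S"
    define a where "a = bform B v x"
    define c where "c = bform B v y"
    have a0: "a > 0" and c0: "c < 0" using v a_def c_def by auto
    have a1: "a \<ge> 1 / dx" using dx v a_def by auto
    have c1: "c \<le> - 1 / dy" using dy v c_def by auto
    define al where "al = (qy * a - be * c) / det"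
    define ga where "ga = (qx * c - be * a) / det"
    define p where "p = al *\<^sub>R x + ga *\<^sub>R y"
    have dnz: "det \<noteq> 0" using dneg by simp
    have px: "bform B p x = a"
    proof -
      have "bform B p x = al * qx + ga * be" unfolding p_def qx_def be_def
        by (simp add: b_add1 b_scale1 b_sym[of y x])
      also have "\<dots> = ((qy * a - be * c) * qx + (qx * c - be * a) * be) / det"
        unfolding al_def ga_def by (simp add: add_divide_distrib)
      also have "\<dots> = (a * det) / det"
        by (rule arg_cong[where f="\<lambda>t. t / det"]) (simp add: det_def power2_eq_square algebra_simps)
      also have "\<dots> = a" using dnz by simp
      finally show ?thesis .
    qed
    have py: "bform B p y = c"
    proof -
      have "bform B p y = al * be + ga * qy" unfolding p_def qy_def be_def
        by (simp add: b_add1 b_scale1)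
      also have "\<dots> = ((qy * a - be * c) * be + (qx * c - be * a) * qy) / det"
        unfolding al_def ga_def by (simp add: add_divide_distrib)
      also have "\<dots> = (c * det) / det"
        by (rule arg_cong[where f="\<lambda>t. t / det"]) (simp add: det_def power2_eq_square algebra_simps)
      also have "\<dots> = c" using dnz by simp
      finally show ?thesis .
    qed
    define w where "w = v - p"
    have wx: "bform B w x = 0" unfolding w_def using px a_def by (simp add: b_diff1)
    have wy: "bform B w y = 0" unfolding w_def using py c_def by (simp add: b_diff1)
    have "bform B w z = 0" unfolding z_def using wx wy by (simp add: b_add2)
    hence qw: "bform B w w \<le> 0" using F1[OF qz] by blast
    have pw: "bform B p w = 0" unfolding p_def
      using wx wy by (simp add: b_add1 b_scale1 b_sym[of x w] b_sym[of y w])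
    have "v = p + w" unfolding w_def by simp
    hence qv: "bform B v v = bform B p p + bform B w w"
      using q_add[of p w] pw by simp
    have qp: "bform B p p = al * a + ga * c"
      using px py unfolding p_def by (simp add: b_add2 b_scale2)
    also have "\<dots> = ((qy * a - be * c) * a + (qx * c - be * a) * c) / det"
      unfolding al_def ga_def by (simp add: add_divide_distrib)
    also have "\<dots> = (qy * a^2 - 2 * be * a * c + qx * c^2) / det"
      by (rule arg_cong[where f="\<lambda>t. t / det"]) (simp add: power2_eq_square algebra_simps)
    also have "\<dots> \<le> (- 2 * be * a * c) / det"
    proof (rule divide_right_mono_neg)
      show "- 2 * be * a * c \<le> qy * a^2 - 2 * be * a * c + qx * c^2"
        using x y unfolding qx_def qy_def by simp
    qed (use dneg in simp)
    finally have "bform B v v \<le> (- 2 * be * a * c) / det" using qv qw by linarith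
    hence "- N < (- 2 * be * a * c) / det" using v by auto
    hence "(- 2 * be * a * c) / det * det < - N * det" using dneg by (intro mult_strict_right_mono_neg) auto
    hence "(- 2 * be * a * c) < - N * det" using dnz by simp
    hence "2 * be * (a * (- c)) < N * (- det)" by (simp add: algebra_simps)
    hence ac: "a * (- c) < M" unfolding M_def using bepos by (simp add: field_simps)
    have "a * (1 / dy) \<le> a * (- c)" using a0 c1 by (intro mult_left_mono) auto
    hence "a / dy < M" using ac by simp
    hence aM: "a < M * dy" using dy by (simp add: divide_less_eq)
    have "(- c) * (1 / dx) \<le> (- c) * a" using c0 a1 by (intro mult_left_mono) auto
    hence "(- c) / dx < M" using ac by (simp add: mult.commute)
    hence "(- c) / dx * dx < M * dx" using dx(1) by (intro mult_strict_right_mono) auto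
    hence cM: "- c < M * dx" using dx(1) by simp
    have "bform B v z = a + c" unfolding z_def a_def c_def by (simp add: b_add2)
    hence "\<bar>bform B v z\<bar> \<le> M * (dx + dy)" using aM cM a0 c0 by (simp add: algebra_simps abs_le_iff)
    thus "v \<in> {v \<in> lattice_pts. bform B v v > - N \<and> \<bar>bform B v z\<bar> \<le> M * (dx + dy)}" using v by auto
  qed
  thus ?thesis using key_finite[OF qz] finite_subset by blast
qed

end



lemma closure_cc:
  assumes "x \<in> closure (pos_cone B h)"
  shows "bform B x x \<ge> 0 \<and> bform B x h \<ge> 0"
proof -
  have cont1: "continuous_on UNIV (\<lambda>x. bform B x x)"
    unfolding bform_def
    by (intro continuous_on_inner continuous_on_id matrix_vector_mult_linear_continuous_on)
  have cont2: "continuous_on UNIV (\<lambda>x. bform B x h)"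
    unfolding bform_def by (intro continuous_intros)
  have cl: "closed {x. 0 \<le> bform B x x \<and> 0 \<le> bform B x h}"
    by (intro closed_Collect_conj closed_Collect_le continuous_on_const cont1 cont2) 
  have "pos_cone B h \<subseteq> {x. 0 \<le> bform B x x \<and> 0 \<le> bform B x h}"
    unfolding pos_cone_def by auto
  hence "closure (pos_cone B h) \<subseteq> {x. 0 \<le> bform B x x \<and> 0 \<le> bform B x h}"
    using cl by (rule closure_minimal)
  thus ?thesis using assms by auto
qed

lemma gen_cone_mem:
  assumes "finite X" "x \<in> X"
  shows "x \<in> gen_cone X"
proof -
  have "(\<Sum>u\<in>X. (if u = x then 1 else 0) *\<^sub>R u) = (\<Sum>u\<in>X. if u = x then u else 0)"
    by (rule sum.cong) auto
  also have "\<dots> = x" using assms by simp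
  finally show ?thesis unfolding gen_cone_def
    by (intro CollectI exI[of _ "\<lambda>u. if u = x then 1 else 0"]) auto
qed

theorem proposition3p4:
  fixes B :: "real^'n^'n" and h :: "real^'n" and N :: real and X :: "(real^'n) set"
  assumes "integral_symmetric_form B"
    and "signature_1_nm1 B"
    and "h \<in> lattice_pts" and "bform B h h > 0"
    and "N > 0"
    and "finite X" and "X \<subseteq> rational_pts"
    and "gen_cone X \<subseteq> closure (pos_cone B h)"
  shows "finite {v \<in> lattice_pts. bform B v v > - N \<and>
           (\<exists>x \<in> gen_cone X \<inter> pos_cone B h. bform B v x = 0)}"
proof -
  note BI = assms(1) and hh = assms(4) and fX = assms(6) and Xr = assms(7)
  obtain P :: "real^'n^'n" and i0 where Pinv: "invertible P"
    and PD: "transpose P ** B ** P = Dm i0"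
    using assms(2) unfolding signature_1_nm1_def Dm_def by blast
  obtain Q where PQ: "P ** Q = mat 1" and QP: "Q ** P = mat 1"
    using Pinv unfolding invertible_def by blast
  interpret sig B P Q i0
    using PQ QP PD by unfold_locales
  have ccX: "bform B x x \<ge> 0 \<and> bform B x h \<ge> 0" if "x \<in> X" for x
    using closure_cc gen_cone_mem[OF fX that] assms(8) by blast
  define A where "A = (\<lambda>x y. {v \<in> lattice_pts. bform B v v > - N \<and> bform B v x > 0 \<and> bform B v y < 0})"
  define C where "C = (\<lambda>x y. {v \<in> lattice_pts. bform B v v > - N \<and> bform B v x = 0 \<and> bform B v y = 0
       \<and> bform B x y > 0})"
  have finA: "finite (A x y)" if "x \<in> X" "y \<in> X" for x y
    unfolding A_def by (rule A_finite[OF BI hh]) (use ccX[OF that(1)] ccX[OF that(2)] that Xr in auto)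
  have finC: "finite (C x y)" if "x \<in> X" "y \<in> X" for x y
  proof (cases "bform B x y > 0")
    case False
    hence "C x y = {}" unfolding C_def by auto
    thus ?thesis by simp
  next
    case True
    have qz: "bform B (x + y) (x + y) > 0" unfolding q_add using True ccX[OF that(1)] ccX[OF that(2)] by simp
    have "C x y \<subseteq> {v \<in> lattice_pts. bform B v v > - N \<and> \<bar>bform B v (x + y)\<bar> \<le> 0}"
      unfolding C_def by (auto simp: b_add2)
    thus ?thesis using key_finite[OF qz] finite_subset by blast
  qed
  have "{v \<in> lattice_pts. bform B v v > - N \<and> (\<exists>x \<in> gen_cone X \<inter> pos_cone B h. bform B v x = 0)}
      \<subseteq> (\<Union>x\<in>X. \<Union>y\<in>X. A x y \<union> C x y)"
  proof
    fix v assume v: "v \<in> {v \<in> lattice_pts. bform B v v > - N \<and> (\<exists>x \<in> gen_cone X \<inter> pos_cone B h. bform B v x = 0)}"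
    hence "\<exists>x \<in> gen_cone X \<inter> pos_cone B h. bform B v x = 0" by simp
    then obtain x0 where x0i: "x0 \<in> gen_cone X \<inter> pos_cone B h" and x03: "bform B v x0 = 0" by (rule bexE)
    have x0: "x0 \<in> gen_cone X" "x0 \<in> pos_cone B h" "bform B v x0 = 0" using x0i x03 by auto
    obtain c where c: "\<And>u. u \<in> X \<Longrightarrow> c u \<ge> 0" and x0e: "x0 = (\<Sum>u\<in>X. c u *\<^sub>R u)"
      using x0(1) unfolding gen_cone_def by blast
    have sum0: "(\<Sum>u\<in>X. c u * bform B v u) = 0" using x0(3) unfolding x0e b_sum2[OF fX] .
    show "v \<in> (\<Union>x\<in>X. \<Union>y\<in>X. A x y \<union> C x y)"
    proof (cases "(\<exists>x\<in>X. c x > 0 \<and> bform B v x > 0) \<and> (\<exists>y\<in>X. c y > 0 \<and> bform B v y < 0)")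
      case True
      then obtain x y where xy: "x \<in> X" "y \<in> X" "bform B v x > 0" "bform B v y < 0" by blast
      have "v \<in> A x y" unfolding A_def using v xy by simp
      thus ?thesis using xy by blast
    next
      case False
      have allz: "bform B v u = 0" if "u \<in> X" "c u > 0" for u
      proof -
        have "c u * bform B v u = 0"
        proof (cases "\<exists>x\<in>X. c x > 0 \<and> bform B v x > 0")
          case True
          hence np: "\<forall>y\<in>X. c y > 0 \<longrightarrow> bform B v y \<ge> 0" using False by auto
          have nn: "\<forall>u\<in>X. c u * bform B v u \<ge> 0"
          proof
            fix u assume u: "u \<in> X"
            show "c u * bform B v u \<ge> 0"
              using c[OF u] np u by (cases "c u = 0") auto
          qed
          have "(\<Sum>u\<in>X. c u * bform B v u) = 0 \<longleftrightarrow> (\<forall>u\<in>X. c u * bform B v u = 0)"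
            by (rule sum_nonneg_eq_0_iff[OF fX]) (use nn in auto)
          thus ?thesis using sum0 that(1) by simp
        next
          case nT: False
          have nn: "\<forall>u\<in>X. - (c u * bform B v u) \<ge> 0"
          proof
            fix u assume u: "u \<in> X"
            show "- (c u * bform B v u) \<ge> 0"
              using c[OF u] nT u by (cases "c u = 0") (auto simp: mult_nonneg_nonpos)
          qed
          moreover have "(\<Sum>u\<in>X. - (c u * bform B v u)) = 0" using sum0 by (simp add: sum_negf)
          moreover have "(\<Sum>u\<in>X. - (c u * bform B v u)) = 0 \<longleftrightarrow> (\<forall>u\<in>X. - (c u * bform B v u) = 0)"
            by (rule sum_nonneg_eq_0_iff[OF fX]) (use nn in auto)
          ultimately have "- (c u * bform B v u) = 0" using that(1) by simp
          thus ?thesis by simp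
        qed
        thus ?thesis using that(2) by simp
      qed
      have "bform B x0 x0 > 0" using x0(2) unfolding pos_cone_def by simp
      hence "(\<Sum>u\<in>X. c u * (\<Sum>u'\<in>X. c u' * bform B u' u)) > 0"
        unfolding x0e b_sum1[OF fX] b_sum2[OF fX] .
      then obtain u where u: "u \<in> X" "c u * (\<Sum>u'\<in>X. c u' * bform B u' u) > 0"
        using sum_pos_ex by blast
      have cu: "c u > 0" using u c[OF u(1)] by (cases "c u = 0") auto
      have "(\<Sum>u'\<in>X. c u' * bform B u' u) > 0" using u cu by (simp add: zero_less_mult_iff)
      then obtain u' where u': "u' \<in> X" "c u' * bform B u' u > 0"
        using sum_pos_ex by blast
      have cu': "c u' > 0" using u' c[OF u'(1)] by (cases "c u' = 0") auto
      have "bform B u' u > 0" using u' cu' by (simp add: zero_less_mult_iff)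
      hence "v \<in> C u' u" unfolding C_def using v allz[OF u(1) cu] allz[OF u'(1) cu'] by simp
      thus ?thesis using u(1) u'(1) by blast
    qed
  qed
  moreover have "finite (\<Union>x\<in>X. \<Union>y\<in>X. A x y \<union> C x y)"
    using fX finA finC by (intro finite_UN_I finite_UnI) auto
  ultimately show ?thesis by (rule finite_subset)
qed


end
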